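(* Let $n,k\in \mathbb{N}$ with $k \geq 2$ and $\Sigma=\{1,\dots,k\}$. Then (a) if $n$ is even, $|L^{\mathrm{even}}_{n,k}| \geq k^n \cdot 2^{1-k}$; (b) if $n \geq k \ln k$, then $|L^{q}_{n,k}| \leq k^n \cdot 2^{2-k}$ for every $q \in \{0,1\}^k$.
   Context: For $q=(q_1,\dots,q_k)\in\{0,1\}^k$, $L^{q}_{n,k}=\{w\in\Sigma^n : |w|_j\equiv q_j \pmod 2 \text{ for all } j\in\Sigma\}$, where $|w|_j$ is the number of occurrences of letter $j$ in $w$; $L^{\mathrm{even}}_{n,k}=L^{\vec 0}_{n,k}$ is the set of words in $\Sigma^n$ in which every letter occurs an even number of times. *)

theory Defs
  imports Complex_Main
begin

definition words :: "nat \<Rightarrow> nat \<Rightarrow> nat list set" where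
  "words n k = {w. length w = n \<and> set w \<subseteq> {1..k}}"

definition occ :: "nat list \<Rightarrow> nat \<Rightarrow> nat" where
  "occ w j = count_list w j"

definition Lq :: "nat \<Rightarrow> nat \<Rightarrow> (nat \<Rightarrow> nat) \<Rightarrow> nat list set" where
  "Lq n k q = {w \<in> words n k. \<forall>j\<in>{1..k}. occ w j mod 2 = q j mod 2}"

definition Leven :: "nat \<Rightarrow> nat \<Rightarrow> nat list set" where
  "Leven n k = Lq n k (\<lambda>_. 0)"

end

theory Submission imports Defs begin

definition NQ :: "nat \<Rightarrow> nat \<Rightarrow> nat set \<Rightarrow> nat" where
 "NQ n k Q = card {w \<in> words n k. \<forall>j\<in>{1..k}. odd (occ w j) \<longleftrightarrow> j \<in> Q}"

definition chi :: "nat set \<Rightarrow> nat set \<Rightarrow> real" where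
 "chi S Q = (\<Prod>i\<in>S. if i \<in> Q then -1 else 1)"

definition flip :: "nat set \<Rightarrow> nat \<Rightarrow> nat set" where
 "flip Q j = (if j \<in> Q then Q - {j} else insert j Q)"

lemma finite_words: "finite (words n k)"
proof -
  have "words n k = {xs. set xs \<subseteq> {1..k} \<and> length xs = n}" by (auto simp: words_def)
  then show ?thesis using finite_lists_length_eq[of "{1..k}" n] by simp
qed

lemma words_0: "words 0 k = {[]}" by (auto simp: words_def)

lemma words_Suc: "words (Suc n) k = (\<Union>j\<in>{1..k}. (#) j ` words n k)"
proof
  show "words (Suc n) k \<subseteq> (\<Union>j\<in>{1..k}. (#) j ` words n k)"
  proof
    fix w assume "w \<in> words (Suc n) k"
    then obtain x xs where w: "w = x # xs" "length xs = n" "x \<in> {1..k}" "set xs \<subseteq> {1..k}"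
      unfolding words_def by (cases w) auto
    then show "w \<in> (\<Union>j\<in>{1..k}. (#) j ` words n k)" unfolding words_def by auto
  qed
  show "(\<Union>j\<in>{1..k}. (#) j ` words n k) \<subseteq> words (Suc n) k"
    unfolding words_def by auto
qed

lemma cond_Cons:
  assumes "x \<in> {1..k}"
  shows "(\<forall>i\<in>{1..k}. odd (occ (x#w) i) \<longleftrightarrow> i \<in> Q) \<longleftrightarrow> (\<forall>i\<in>{1..k}. odd (occ w i) \<longleftrightarrow> i \<in> flip Q x)"
proof -
  have "(odd (occ (x#w) i) \<longleftrightarrow> i \<in> Q) \<longleftrightarrow> (odd (occ w i) \<longleftrightarrow> i \<in> flip Q x)" for i
  proof (cases "i = x")
    case True
    then have "occ (x#w) i = Suc (occ w i)" by (simp add: occ_def)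
    then show ?thesis using True by (simp add: flip_def)
  next
    case False
    then have "occ (x#w) i = occ w i" by (simp add: occ_def)
    then show ?thesis using False by (simp add: flip_def)
  qed
  then show ?thesis by simp
qed

lemma NQ_Suc: "NQ (Suc n) k Q = (\<Sum>j\<in>{1..k}. NQ n k (flip Q j))"
proof -
  let ?A = "\<lambda>j. {w \<in> words n k. \<forall>i\<in>{1..k}. odd (occ w i) \<longleftrightarrow> i \<in> flip Q j}"
  have eq: "{w \<in> words (Suc n) k. \<forall>j\<in>{1..k}. odd (occ w j) \<longleftrightarrow> j \<in> Q}
     = (\<Union>j\<in>{1..k}. (#) j ` ?A j)"
  proof (rule set_eqI)
    fix x
    show "x \<in> {w \<in> words (Suc n) k. \<forall>j\<in>{1..k}. odd (occ w j) \<longleftrightarrow> j \<in> Q} \<longleftrightarrow> x \<in> (\<Union>j\<in>{1..k}. (#) j ` ?A j)"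
    proof
      assume "x \<in> {w \<in> words (Suc n) k. \<forall>j\<in>{1..k}. odd (occ w j) \<longleftrightarrow> j \<in> Q}"
      then obtain j w where jw: "j \<in> {1..k}" "w \<in> words n k" "x = j # w"
        and P: "\<forall>i\<in>{1..k}. odd (occ (j#w) i) \<longleftrightarrow> i \<in> Q"
        unfolding words_Suc by blast
      have "w \<in> ?A j" using jw P cond_Cons[OF jw(1), of w Q] by simp
      then show "x \<in> (\<Union>j\<in>{1..k}. (#) j ` ?A j)" using jw by blast
    next
      assume "x \<in> (\<Union>j\<in>{1..k}. (#) j ` ?A j)"
      then obtain j w where jw: "j \<in> {1..k}" "w \<in> ?A j" "x = j # w" by blast
      have "\<forall>i\<in>{1..k}. odd (occ (j#w) i) \<longleftrightarrow> i \<in> Q" using jw cond_Cons[OF jw(1), of w Q] by simp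
      moreover have "j # w \<in> words (Suc n) k" using jw unfolding words_Suc by blast
      ultimately show "x \<in> {w \<in> words (Suc n) k. \<forall>j\<in>{1..k}. odd (occ w j) \<longleftrightarrow> j \<in> Q}"
        using jw by simp
    qed
  qed
  have "card (\<Union>j\<in>{1..k}. (#) j ` ?A j) = (\<Sum>j\<in>{1..k}. card ((#) j ` ?A j))"
    by (rule card_UN_disjoint) (auto intro: finite_subset[OF _ finite_words])
  also have "\<dots> = (\<Sum>j\<in>{1..k}. card (?A j))"
    by (intro sum.cong refl card_image) (auto simp: inj_on_def)
  finally show ?thesis unfolding NQ_def eq .
qed

lemma chi_flip: "finite S \<Longrightarrow> chi S (flip Q j) = chi S Q * (if j \<in> S then -1 else 1)"
proof -
  assume f: "finite S"
  have "chi S (flip Q j) = (\<Prod>i\<in>S. (if i \<in> Q then -1 else 1) * (if i = j then -1 else (1::real)))"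
    unfolding chi_def flip_def by (intro prod.cong refl) auto
  also have "\<dots> = chi S Q * (\<Prod>i\<in>S. if i = j then -1 else (1::real))"
    by (simp add: prod.distrib chi_def)
  also have "(\<Prod>i\<in>S. if i = j then -1 else (1::real)) = (if j \<in> S then -1 else 1)"
    using prod.delta[OF f, of j "\<lambda>_. -1::real"] by (simp add: eq_commute)
  finally show ?thesis .
qed

lemma sum_sign: "S \<subseteq> {1..k} \<Longrightarrow> (\<Sum>j\<in>{1..k}. if j \<in> S then -1 else 1::real) = real k - 2 * real (card S)"
proof -
  assume S: "S \<subseteq> {1..k}"
  have "(\<Sum>j\<in>{1..k}. if j \<in> S then -1 else 1::real) = - real (card S) + real (card ({1..k} - S))"
    using S by (simp add: sum.If_cases Diff_eq Int_absorb2 inf.absorb_iff2)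
  also have "card ({1..k} - S) = k - card S" using S by (simp add: card_Diff_subset finite_subset)
  also have "card S \<le> k" using card_mono[OF _ S] by simp
  ultimately show ?thesis by simp
qed

lemma chi_sum: "(\<Sum>S\<in>Pow {1..k}. chi S Q) = (if Q \<inter> {1..k} = {} then 2^k else 0)"
proof -
  have "(\<Prod>i\<in>{1..k}. (if i \<in> Q then -1 else 1) + (1::real)) = (\<Sum>S\<in>Pow {1..k}. (\<Prod>i\<in>S. if i \<in> Q then -1 else 1) * (\<Prod>i\<in>{1..k}-S. 1))"
    by (rule prod_add) simp
  moreover have "(\<Prod>i\<in>{1..k}. (if i \<in> Q then -1 else 1) + (1::real)) = (\<Prod>i\<in>{1..k}. (if i \<in> Q then 0 else 2::real))"
    by (intro prod.cong) auto
  ultimately have "(\<Sum>S\<in>Pow {1..k}. chi S Q) = (\<Prod>i\<in>{1..k}. (if i \<in> Q then 0 else 2::real))"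
    by (simp add: chi_def)
  also have "\<dots> = (if Q \<inter> {1..k} = {} then 2^k else 0)"
  proof (cases "Q \<inter> {1..k} = {}")
    case True
    then have "(\<Prod>i\<in>{1..k}. (if i \<in> Q then 0 else 2::real)) = (\<Prod>i\<in>{1..k}. 2)"
      by (intro prod.cong) auto
    then show ?thesis using True by simp
  next
    case False
    then show ?thesis by (auto simp: prod_zero_iff)
  qed
  finally show ?thesis .
qed

lemma NQ_formula: "2^k * real (NQ n k Q) = (\<Sum>S\<in>Pow {1..k}. chi S Q * (real k - 2 * real (card S))^n)"
proof (induction n arbitrary: Q)
  case 0
  have "NQ 0 k Q = (if Q \<inter> {1..k} = {} then 1 else 0)"
  proof -
    have "{w \<in> words 0 k. \<forall>j\<in>{1..k}. odd (occ w j) \<longleftrightarrow> j \<in> Q} = (if Q \<inter> {1..k} = {} then {[]} else {})"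
      unfolding words_0 by (auto simp: occ_def)
    then show ?thesis unfolding NQ_def by simp
  qed
  then show ?case using chi_sum[of Q k] by simp
next
  case (Suc n)
  have "2^k * real (NQ (Suc n) k Q) = (\<Sum>j\<in>{1..k}. 2^k * real (NQ n k (flip Q j)))"
    by (simp add: NQ_Suc sum_distrib_left)
  also have "\<dots> = (\<Sum>j\<in>{1..k}. \<Sum>S\<in>Pow {1..k}. chi S (flip Q j) * (real k - 2 * real (card S))^n)"
    using Suc by simp
  also have "\<dots> = (\<Sum>S\<in>Pow {1..k}. \<Sum>j\<in>{1..k}. chi S (flip Q j) * (real k - 2 * real (card S))^n)"
    by (rule sum.swap)
  also have "\<dots> = (\<Sum>S\<in>Pow {1..k}. chi S Q * (real k - 2 * real (card S))^n * (\<Sum>j\<in>{1..k}. if j \<in> S then -1 else 1::real))"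
    by (intro sum.cong refl) (auto simp: chi_flip finite_subset sum_distrib_left mult_ac intro!: sum.cong)
  also have "\<dots> = (\<Sum>S\<in>Pow {1..k}. chi S Q * (real k - 2 * real (card S))^Suc n)"
    by (intro sum.cong refl) (simp add: sum_sign[simplified])
  finally show ?case .
qed


lemma L1: assumes "0 \<le> x" "x \<le> 1" shows "(1 - x)^n \<le> exp (-(x * real n))"
proof -
  have "(1 - x)^n \<le> exp (-x)^n"
    using assms exp_ge_add_one_self[of "-x"] by (intro power_mono) auto
  also have "\<dots> = exp (-(x * real n))" by (simp add: exp_of_nat_mult[symmetric] mult_ac)
  finally show ?thesis .
qed

lemma L2:
  assumes k: "k \<ge> 2" and n: "real n \<ge> real k * ln (real k)" and m: "2 * m \<le> k"
  shows "(real k - 2 * real m)^n \<le> real k ^ n / real k ^ (2*m)"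
proof -
  define x where "x = 2 * real m / real k"
  have kpos: "real k > 0" using k by simp
  have x0: "0 \<le> x" and x1: "x \<le> 1" using m kpos by (auto simp: x_def field_simps)
  have "real k - 2 * real m = real k * (1 - x)" using kpos by (simp add: x_def field_simps)
  then have "(real k - 2 * real m)^n = real k ^ n * (1 - x)^n" by (simp add: power_mult_distrib)
  also have "\<dots> \<le> real k ^ n * exp (-(x * real n))"
    using L1[OF x0 x1] by (intro mult_left_mono) auto
  also have "exp (-(x * real n)) \<le> exp (-(real (2*m) * ln (real k)))"
  proof -
    have "x * real n \<ge> x * (real k * ln (real k))" using n x0 by (intro mult_left_mono) auto
    also have "x * (real k * ln (real k)) = real (2*m) * ln (real k)" using kpos by (simp add: x_def)
    finally show ?thesis by simp
  qed
  also have "exp (-(real (2*m) * ln (real k))) = 1 / real k ^ (2*m)"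
  proof -
    have "exp (real (2*m) * ln (real k)) = real k ^ (2*m)"
      using kpos exp_of_nat_mult[of "2*m" "ln (real k)"] by simp
    then show ?thesis by (simp add: exp_minus divide_inverse)
  qed
  finally show ?thesis using kpos by (simp add: divide_inverse mult_left_mono)
qed

lemma key:
  assumes k: "k \<ge> 2" and n: "real n \<ge> real k * ln (real k)" and j: "1 \<le> j" "j < k"
  shows "real (k choose j) * \<bar>real k - 2 * real j\<bar>^n \<le> real k ^ n * ((1/2)^j + (1/2)^(k-j))"
proof -
  define m where "m = min j (k - j)"
  have m1: "1 \<le> m" and m2: "2 * m \<le> k" using j by (auto simp: m_def)
  have abs_eq: "\<bar>real k - 2 * real j\<bar> = real k - 2 * real m"
    using j by (auto simp: m_def min_def)
  have ch: "k choose j = k choose m"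
    using j binomial_symmetric[of j k] by (auto simp: m_def min_def)
  have ch2: "real (k choose m) \<le> real k ^ m"
    using binomial_le_pow[of m k] m2 by (metis of_nat_le_iff of_nat_power le_trans le_add2 mult_2)
  have kpos: "real k > 0" using k by simp
  have "real (k choose j) * \<bar>real k - 2 * real j\<bar>^n \<le> real k ^ m * (real k ^ n / real k ^ (2*m))"
    unfolding ch abs_eq using ch2 L2[OF k n m2] m2
    by (intro mult_mono) auto
  also have "\<dots> = real k ^ n / real k ^ m"
    using kpos by (simp add: power_mult field_simps power2_eq_square power_mult_distrib)
  also have "\<dots> \<le> real k ^ n / 2 ^ m"
    using k kpos by (intro divide_left_mono power_mono) auto
  also have "\<dots> = real k ^ n * (1/2)^m" by (simp add: power_divide)
  also have "\<dots> \<le> real k ^ n * ((1/2)^j + (1/2)^(k-j))"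
    using kpos by (intro mult_left_mono) (auto simp: m_def min_def)
  finally show ?thesis .
qed

lemma geom: "(\<Sum>j\<in>{1..m}. (1/2::real)^j) \<le> 1"
proof -
  have "(\<Sum>j\<in>{1..m}. (1/2::real)^j) = 1 - (1/2)^m"
    by (induction m) (auto simp: sum.cl_ivl_Suc field_simps)
  then show ?thesis by simp
qed

lemma reflect: "(\<Sum>j\<in>{1..k-1}. (1/2::real)^(k-j)) = (\<Sum>j\<in>{1..k-1}. (1/2)^j)"
  by (rule sum.reindex_bij_witness[where i="\<lambda>j. k - j" and j="\<lambda>j. k - j"]) auto

lemma sum_card: "(\<Sum>S\<in>Pow {1..k}. g (card S)) = (\<Sum>j\<in>{0..k}. real (k choose j) * (g j :: real))"
proof -
  have "(\<Sum>S\<in>Pow {1..k}. g (card S)) = (\<Sum>j\<in>{0..k}. \<Sum>S\<in>{S. S \<in> Pow {1..k} \<and> card S = j}. g (card S))"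
    by (rule sum.group[symmetric]) (auto intro: card_mono[of "{1..k}", simplified])
  also have "\<dots> = (\<Sum>j\<in>{0..k}. real (k choose j) * g j)"
  proof (intro sum.cong refl)
    fix j assume "j \<in> {0..k}"
    have "(\<Sum>S\<in>{S. S \<in> Pow {1..k} \<and> card S = j}. g (card S)) = (\<Sum>S\<in>{S. S \<subseteq> {1..k} \<and> card S = j}. g j)"
      by (intro sum.cong) auto
    also have "\<dots> = real (k choose j) * g j" using n_subsets[of "{1..k}" j] by simp
    finally show "(\<Sum>S\<in>{S. S \<in> Pow {1..k} \<and> card S = j}. g (card S)) = real (k choose j) * g j" .
  qed
  finally show ?thesis .
qed


lemma Lq_NQ: "card (Lq n k q) = NQ n k {j. odd (q j)}"
proof -
  have "Lq n k q = {w \<in> words n k. \<forall>j\<in>{1..k}. odd (occ w j) \<longleftrightarrow> j \<in> {j. odd (q j)}}"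
    unfolding Lq_def by (auto simp: odd_iff_mod_2_eq_one)
  then show ?thesis by (simp add: NQ_def)
qed

lemma powr_conv: "(2::real) powr (real a - real k) = 2^a / 2^k"
  by (simp add: powr_diff powr_realpow)

theorem lemma7p4:
  fixes n k :: nat
  assumes "k \<ge> 2"
  shows "(even n \<longrightarrow> real (card (Leven n k)) \<ge> real k ^ n * 2 powr (1 - real k))
       \<and> (real n \<ge> real k * ln (real k) \<longrightarrow>
            (\<forall>q. (\<forall>j\<in>{1..k}. q j \<in> {0, 1}) \<longrightarrow>
               real (card (Lq n k q)) \<le> real k ^ n * 2 powr (2 - real k)))"
proof (intro conjI impI allI)
  have kpos: "real k > 0" using assms by simp
  have p2: "(0::real) < 2^k" by simp
  assume ev: "even n"
  have c: "card (Leven n k) = NQ n k {}" unfolding Leven_def Lq_NQ by simp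
  have "2 * real k ^ n = (\<Sum>S\<in>{{}, {1..k}}. (real k - 2 * real (card S))^n)"
    using assms ev by (simp add: power_minus_even)
  also have "\<dots> \<le> (\<Sum>S\<in>Pow {1..k}. (real k - 2 * real (card S))^n)"
    using ev by (intro sum_mono2) (auto simp: zero_le_even_power)
  also have "\<dots> = 2^k * real (NQ n k {})"
    unfolding NQ_formula by (simp add: chi_def)
  finally have "2 * real k ^ n \<le> 2^k * real (NQ n k {})" .
  then have "real k ^ n * (2 / 2^k) \<le> real (NQ n k {})"
    using p2 by (simp add: field_simps)
  then show "real (card (Leven n k)) \<ge> real k ^ n * 2 powr (1 - real k)"
    using powr_conv[of 1 k] c by simp
next
  fix q :: "nat \<Rightarrow> nat"
  assume n: "real n \<ge> real k * ln (real k)"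
  have kpos: "real k > 0" using assms by simp
  have p2: "(0::real) < 2^k" by simp
  define Q where "Q = {j. odd (q j)}"
  have "2^k * real (NQ n k Q) = (\<Sum>S\<in>Pow {1..k}. chi S Q * (real k - 2 * real (card S))^n)"
    by (rule NQ_formula)
  also have "\<dots> \<le> (\<Sum>S\<in>Pow {1..k}. \<bar>real k - 2 * real (card S)\<bar>^n)"
  proof (intro sum_mono)
    fix S assume "S \<in> Pow {1..k}"
    have "\<bar>chi S Q\<bar> = 1" unfolding chi_def abs_prod by (intro prod.neutral) auto
    then have "chi S Q * (real k - 2 * real (card S))^n \<le> \<bar>chi S Q * (real k - 2 * real (card S))^n\<bar>"
      by linarith
    also have "\<dots> = \<bar>real k - 2 * real (card S)\<bar>^n" using \<open>\<bar>chi S Q\<bar> = 1\<close> by (simp add: abs_mult power_abs)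
    finally show "chi S Q * (real k - 2 * real (card S))^n \<le> \<bar>real k - 2 * real (card S)\<bar>^n" .
  qed
  also have "\<dots> = (\<Sum>j\<in>{0..k}. real (k choose j) * \<bar>real k - 2 * real j\<bar>^n)"
    by (rule sum_card)
  also have "{0..k} = insert 0 (insert k {1..k-1})" using assms by auto
  also have "(\<Sum>j\<in>insert 0 (insert k {1..k-1}). real (k choose j) * \<bar>real k - 2 * real j\<bar>^n)
      = real k ^ n + real k ^ n + (\<Sum>j\<in>{1..k-1}. real (k choose j) * \<bar>real k - 2 * real j\<bar>^n)"
    using assms by simp
  also have "(\<Sum>j\<in>{1..k-1}. real (k choose j) * \<bar>real k - 2 * real j\<bar>^n)
      \<le> (\<Sum>j\<in>{1..k-1}. real k ^ n * ((1/2)^j + (1/2)^(k-j)))"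
    using assms by (intro sum_mono key[OF assms n]) auto
  also have "\<dots> = real k ^ n * ((\<Sum>j\<in>{1..k-1}. (1/2)^j) + (\<Sum>j\<in>{1..k-1}. (1/2)^(k-j)))"
    by (simp only: sum_distrib_left[symmetric] sum.distrib)
  also have "\<dots> \<le> real k ^ n * 2"
    unfolding reflect using geom[of "k-1"] kpos by (intro mult_left_mono) auto
  finally have "2^k * real (NQ n k Q) \<le> 4 * real k ^ n" by simp
  then have "real (NQ n k Q) \<le> real k ^ n * (2^2 / 2^k)"
    using p2 by (simp add: field_simps)
  then show "real (card (Lq n k q)) \<le> real k ^ n * 2 powr (2 - real k)"
    using powr_conv[of 2 k] by (simp add: Lq_NQ Q_def)
qed

end
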